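(* Let $k\ge1$, and let $\mathcal P=\{p_1,\dots,p_{k^2}\}$ be a family of real polynomials in the commuting variables $x_1,\dots,x_{2k^2}$ admitting an nc representation $p(X,Y)$. Suppose a term $a\,x_i^sx_j^t$ with $a\ne0$ and positive integers $s,t$ occurs in some polynomial of the family, and that for some $c\in\{1,\dots,k\}$ one of $x_i,x_j$ is the $(c,c)$ entry of $X$ and the other is the $(c,c)$ entry of $Y$. Then that polynomial is in position $(c,c)$ of the array $p(X,Y)$.
   Context: The family $\mathcal P$ admits an nc representation $p(X,Y)$ if there are $k\times k$ matrices $X,Y$ whose $2k^2$ entries are the variables $x_1,\dots,x_{2k^2}$, each used exactly once, and a noncommutative polynomial $p$ in two letters with real coefficients such that the matrix $p(X,Y)$ is a $k\times k$ array whose entries are $p_1,\dots,p_{k^2}$, each exactly once. A "term" means a monomial with its nonzero coefficient after collecting like terms. *)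

theory Defs
  imports Complex_Main "HOL-Library.FuncSet"
begin

text \<open>Commutative real polynomials in variables x_0, x_1, ... are represented as
  coefficient functions on monomials; a monomial is an exponent function
  nat => nat (exponent of each variable).  Noncommutative polynomials in two letters
  are coefficient functions on words over bool (False = letter X, True = letter Y),
  with finite support.\<close>

type_synonym monom = "nat \<Rightarrow> nat"
type_synonym cpoly = "monom \<Rightarrow> real"
type_synonym ncpoly = "bool list \<Rightarrow> real"

text \<open>v b r c is the index of the variable sitting at entry (r,c) of X (b = False)
  or of Y (b = True).  Rows/columns are indexed 0..k-1, variables 0..2k^2-1.\<close>

definition valid_vars :: "nat \<Rightarrow> (bool \<Rightarrow> nat \<Rightarrow> nat \<Rightarrow> nat) \<Rightarrow> bool" where
  "valid_vars k v \<longleftrightarrow>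
     bij_betw (\<lambda>(b, r, c). v b r c) (UNIV \<times> {..<k} \<times> {..<k}) {..<2 * k^2}"

definition paths :: "nat \<Rightarrow> bool list \<Rightarrow> nat \<Rightarrow> nat \<Rightarrow> (nat \<Rightarrow> nat) set" where
  "paths k w r c = {i \<in> {..length w} \<rightarrow>\<^sub>E {..<k}. i 0 = r \<and> i (length w) = c}"

definition path_monom :: "(bool \<Rightarrow> nat \<Rightarrow> nat \<Rightarrow> nat) \<Rightarrow> bool list \<Rightarrow> (nat \<Rightarrow> nat) \<Rightarrow> monom" where
  "path_monom v w i = (\<lambda>x. card {l. l < length w \<and> v (w ! l) (i l) (i (Suc l)) = x})"

text \<open>Entry (r,c) of the matrix p(X,Y), as a commutative polynomial.\<close>
definition nc_entry :: "nat \<Rightarrow> (bool \<Rightarrow> nat \<Rightarrow> nat \<Rightarrow> nat) \<Rightarrow> ncpoly \<Rightarrow> nat \<Rightarrow> nat \<Rightarrow> cpoly" where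
  "nc_entry k v p r c = (\<lambda>m. \<Sum>w\<in>{w. p w \<noteq> 0}.
      p w * real (card {i \<in> paths k w r c. path_monom v w i = m}))"

definition nc_representation :: "nat \<Rightarrow> cpoly set \<Rightarrow> (bool \<Rightarrow> nat \<Rightarrow> nat \<Rightarrow> nat) \<Rightarrow> ncpoly \<Rightarrow> bool" where
  "nc_representation k P v p \<longleftrightarrow>
     valid_vars k v \<and> finite {w. p w \<noteq> 0} \<and>
     bij_betw (\<lambda>(r, c). nc_entry k v p r c) ({..<k} \<times> {..<k}) P"

definition admits_nc_rep :: "nat \<Rightarrow> cpoly set \<Rightarrow> bool" where
  "admits_nc_rep k P \<longleftrightarrow> (\<exists>v p. nc_representation k P v p)"

definition monom2 :: "nat \<Rightarrow> nat \<Rightarrow> nat \<Rightarrow> nat \<Rightarrow> monom" where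
  "monom2 i s j t = (\<lambda>x. if x = i then s else if x = j then t else 0)"

end

theory Submission
  imports Defs
begin

theorem lemma2p18:
  fixes k :: nat and P :: "cpoly set" and v :: "bool \<Rightarrow> nat \<Rightarrow> nat \<Rightarrow> nat"
    and p :: ncpoly and q :: cpoly and i j s t c :: nat
  assumes "k \<ge> 1"
    and "card P = k^2"
    and rep: "nc_representation k P v p"
    and "q \<in> P"
    and "s > 0" and "t > 0"
    and "q (monom2 i s j t) \<noteq> 0"
    and "c < k"
    and "(i = v False c c \<and> j = v True c c) \<or> (i = v True c c \<and> j = v False c c)"
  shows "nc_entry k v p c c = q"
proof -
  have vv: "valid_vars k v" and bj: "bij_betw (\<lambda>(r, c). nc_entry k v p r c) ({..<k} \<times> {..<k}) P"
    using rep unfolding nc_representation_def by auto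
  have inj: "inj_on (\<lambda>(b, r, c). v b r c) (UNIV \<times> {..<k} \<times> {..<k})"
    using vv unfolding valid_vars_def bij_betw_def by auto
  have injv: "b = b' \<and> r = r' \<and> c1 = c'"
    if "r < k" "c1 < k" "r' < k" "c' < k" "v b r c1 = v b' r' c'" for b r c1 b' r' c'
    using inj_onD[OF inj, of "(b,r,c1)" "(b',r',c')"] that by auto
  have ij: "i \<noteq> j" using assms(9) injv[of c c c c False True] \<open>c < k\<close> by auto
  obtain r c' where rc: "r < k" "c' < k" and qdef: "q = nc_entry k v p r c'"
    using bj \<open>q \<in> P\<close> unfolding bij_betw_def by auto
  define m where "m = monom2 i s j t"
  have "nc_entry k v p r c' m \<noteq> 0" using assms(7) qdef m_def by simp
  then have "(\<Sum>w\<in>{w. p w \<noteq> 0}. p w * real (card {ii \<in> paths k w r c'. path_monom v w ii = m})) \<noteq> 0"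
    unfolding nc_entry_def by simp
  then obtain w where "w \<in> {w. p w \<noteq> 0}"
    and "p w * real (card {ii \<in> paths k w r c'. path_monom v w ii = m}) \<noteq> 0"
    by (rule sum.not_neutral_contains_not_neutral)
  then have cw: "card {ii \<in> paths k w r c'. path_monom v w ii = m} \<noteq> 0" by auto
  then have "{ii \<in> paths k w r c'. path_monom v w ii = m} \<noteq> {}" by (metis card.empty)
  then obtain ii where ii: "ii \<in> paths k w r c'" and pm: "path_monom v w ii = m"
    by blast
  have iik: "\<And>l. l \<le> length w \<Longrightarrow> ii l < k" and ii0: "ii 0 = r" and iin: "ii (length w) = c'"
    using ii unfolding paths_def by auto
  have "path_monom v w ii i = s" using pm unfolding m_def monom2_def by simp
  then have "{l. l < length w \<and> v (w ! l) (ii l) (ii (Suc l)) = i} \<noteq> {}"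
    using \<open>s > 0\<close> unfolding path_monom_def by (metis card.empty less_numeral_extra(3))
  then have lw: "length w > 0" by auto
  have step: "ii l = c \<and> ii (Suc l) = c" if "l < length w" for l
  proof -
    define x where "x = v (w ! l) (ii l) (ii (Suc l))"
    have "l \<in> {l. l < length w \<and> v (w ! l) (ii l) (ii (Suc l)) = x}" using that x_def by simp
    then have "path_monom v w ii x \<noteq> 0" unfolding path_monom_def
    proof -
      have "finite {l. l < length w \<and> v (w ! l) (ii l) (ii (Suc l)) = x}" by simp
      then show "card {l. l < length w \<and> v (w ! l) (ii l) (ii (Suc l)) = x} \<noteq> 0"
        using \<open>l \<in> _\<close> by (simp add: card_eq_0_iff) blast
    qed
    then have "m x \<noteq> 0" using pm by simp
    then have "x = i \<or> x = j" unfolding m_def monom2_def by (auto split: if_splits)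
    moreover have "ii l < k" "ii (Suc l) < k" using iik that by auto
    ultimately show ?thesis using assms(9) \<open>c < k\<close> injv[of "ii l" "ii (Suc l)" c c "w ! l"] unfolding x_def by blast
  qed
  have "r = c" using step[of 0] lw ii0 by simp
  moreover have "c' = c" using step[of "length w - 1"] lw iin by simp
  ultimately show ?thesis using qdef by simp
qed

end
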